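(* Let $G_{\mathrm{syn}}$ be an admissible group w.r.t. a prefix $P=\forall x_1,\dots,x_n\,\exists y_1(D_1),\dots,y_k(D_k)$. For every $g\in G_{\mathrm{syn}}$, the function $\mathcal S(P)\to\mathcal S(P)$, $s\mapsto g(s)$, lies in the associated group of $G_{\mathrm{syn}}$.
   Context: $X=\{x_1,\dots,x_n\}$, $Y=\{y_1,\dots,y_k\}$ are finite disjoint sets of propositional variables; $\operatorname{BF}(V)$ the propositional formulas over $V\subseteq X\cup Y$; $\mathcal A(V)$ the assignments $V\to\{\top,\bot\}$; $[\phi]_\sigma$ the truth value. Dependency sets $D_j\subseteq X$. An interpretation is $s=(s_1,\dots,s_k)$ with $s_j:\{\top,\bot\}^{|D_j|}\to\{\top,\bot\}$; $\mathcal S(P)$ the set of interpretations. For $\sigma\in\mathcal A(X)$, $\sigma_s\in\mathcal A(X\cup Y)$ equals $\sigma$ on $X$ and $\sigma_s(y_j)=s_j$ evaluated at $\sigma$'s values on $D_j$. For $g:\operatorname{BF}(V)\to\operatorname{BF}(V)$ and $\rho\in\mathcal A(V)$, $g(\rho)(v)=[g(v)]_\rho$; $g$ preserves propositional satisfiability if $[g(\phi)]_\rho=[\phi]_{g(\rho)}$ always. A formula in $\operatorname{BF}(Y)$ depends on $x_i$ if it contains some $y_j$ with $x_i\in D_j$. A bijection $g$ of $\operatorname{BF}(X\cup Y)$ is admissible w.r.t. $P$ if it preserves propositional satisfiability, $g(x_i)\in\operatorname{BF}(X)$, $g(y_j)\in\operatorname{BF}(Y)$, and if $g(y_j)$ depends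 on $x_i$ then $g^{-1}(x_i)\in\operatorname{BF}(D_j)$. An admissible group is a subgroup of all admissible functions. For admissible $g$ and $\sigma\in\mathcal A(X)$, $g(\sigma)(x)=[g(x)]_\sigma$. For $g\in G_{\mathrm{syn}}$, $g(s)$ is the (well-defined) interpretation $t$ with $\sigma_t=g(g^{-1}(\sigma)_s)$ for all $\sigma\in\mathcal A(X)$. The associated group of $G_{\mathrm{syn}}$ is the set of all bijections $f:\mathcal S(P)\to\mathcal S(P)$ such that for every $s\in\mathcal S(P)$ and every $\sigma\in\mathcal A(X)$ there exists $g\in G_{\mathrm{syn}}$ with $g(\sigma)_{f(s)}=g(\sigma_s)$. *)

theory Defs
  imports Main
begin

text \<open>Propositional formulas over a set of variables of type 'v.
  Variables X are modelled by a finite type 'x, Y by a finite type 'y,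
  and X \<union> Y by the disjoint sum 'x + 'y.\<close>

datatype 'v form =
    FVar 'v
  | FTrue
  | FFalse
  | FNot "'v form"
  | FAnd "'v form" "'v form"
  | FOr "'v form" "'v form"
  | FImp "'v form" "'v form"
  | FIff "'v form" "'v form"

primrec eval :: "('v \<Rightarrow> bool) \<Rightarrow> 'v form \<Rightarrow> bool" where
  "eval \<rho> (FVar v) = \<rho> v"
| "eval \<rho> FTrue = True"
| "eval \<rho> FFalse = False"
| "eval \<rho> (FNot \<phi>) = (\<not> eval \<rho> \<phi>)"
| "eval \<rho> (FAnd \<phi> \<psi>) = (eval \<rho> \<phi> \<and> eval \<rho> \<psi>)"
| "eval \<rho> (FOr \<phi> \<psi>) = (eval \<rho> \<phi> \<or> eval \<rho> \<psi>)"
| "eval \<rho> (FImp \<phi> \<psi>) = (eval \<rho> \<phi> \<longrightarrow> eval \<rho> \<psi>)"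
| "eval \<rho> (FIff \<phi> \<psi>) = (eval \<rho> \<phi> \<longleftrightarrow> eval \<rho> \<psi>)"

primrec fvars :: "'v form \<Rightarrow> 'v set" where
  "fvars (FVar v) = {v}"
| "fvars FTrue = {}"
| "fvars FFalse = {}"
| "fvars (FNot \<phi>) = fvars \<phi>"
| "fvars (FAnd \<phi> \<psi>) = fvars \<phi> \<union> fvars \<psi>"
| "fvars (FOr \<phi> \<psi>) = fvars \<phi> \<union> fvars \<psi>"
| "fvars (FImp \<phi> \<psi>) = fvars \<phi> \<union> fvars \<psi>"
| "fvars (FIff \<phi> \<psi>) = fvars \<phi> \<union> fvars \<psi>"

definition BF :: "('x + 'y) set \<Rightarrow> ('x + 'y) form set" where
  "BF V = {\<phi>. fvars \<phi> \<subseteq> V}"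

definition act_asg :: "(('x + 'y) form \<Rightarrow> ('x + 'y) form) \<Rightarrow> (('x + 'y) \<Rightarrow> bool) \<Rightarrow> ('x + 'y) \<Rightarrow> bool" where
  "act_asg g \<rho> = (\<lambda>v. eval \<rho> (g (FVar v)))"

definition preserves_sat :: "(('x + 'y) form \<Rightarrow> ('x + 'y) form) \<Rightarrow> bool" where
  "preserves_sat g \<longleftrightarrow> (\<forall>\<phi> \<rho>. eval \<rho> (g \<phi>) = eval (act_asg g \<rho>) \<phi>)"

definition depends_on :: "('y \<Rightarrow> 'x set) \<Rightarrow> ('x + 'y) form \<Rightarrow> 'x \<Rightarrow> bool" where
  "depends_on D \<phi> x \<longleftrightarrow> (\<exists>j. Inr j \<in> fvars \<phi> \<and> x \<in> D j)"

definition admissible :: "('y \<Rightarrow> 'x set) \<Rightarrow> (('x + 'y) form \<Rightarrow> ('x + 'y) form) \<Rightarrow> bool" where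
  "admissible D g \<longleftrightarrow>
     bij g \<and> preserves_sat g \<and>
     (\<forall>x. g (FVar (Inl x)) \<in> BF (range Inl)) \<and>
     (\<forall>j. g (FVar (Inr j)) \<in> BF (range Inr)) \<and>
     (\<forall>j x. depends_on D (g (FVar (Inr j))) x \<longrightarrow> inv g (FVar (Inl x)) \<in> BF (Inl ` D j))"

definition admissible_group :: "('y \<Rightarrow> 'x set) \<Rightarrow> (('x + 'y) form \<Rightarrow> ('x + 'y) form) set \<Rightarrow> bool" where
  "admissible_group D G \<longleftrightarrow>
     (\<forall>g\<in>G. admissible D g) \<and> id \<in> G \<and>
     (\<forall>g\<in>G. \<forall>h\<in>G. g \<circ> h \<in> G) \<and> (\<forall>g\<in>G. inv g \<in> G)"

text \<open>Interpretations: s_j is a Boolean function of the values of the variables in D_j,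
  represented as a function of a full X-assignment that only depends on D_j.\<close>
definition interps :: "('y \<Rightarrow> 'x set) \<Rightarrow> ('y \<Rightarrow> ('x \<Rightarrow> bool) \<Rightarrow> bool) set" where
  "interps D = {s. \<forall>j \<sigma> \<sigma>'. (\<forall>x\<in>D j. \<sigma> x = \<sigma>' x) \<longrightarrow> s j \<sigma> = s j \<sigma>'}"

definition ext_asg :: "('x \<Rightarrow> bool) \<Rightarrow> ('y \<Rightarrow> ('x \<Rightarrow> bool) \<Rightarrow> bool) \<Rightarrow> ('x + 'y) \<Rightarrow> bool" where
  "ext_asg \<sigma> s = (\<lambda>v. case v of Inl x \<Rightarrow> \<sigma> x | Inr j \<Rightarrow> s j \<sigma>)"

text \<open>g(\<sigma>)(x) = [g(x)]_\<sigma> for \<sigma> \<in> A(X); g(x) \<in> BF(X), so Y-values are irrelevant.\<close>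
definition act_X :: "(('x + 'y) form \<Rightarrow> ('x + 'y) form) \<Rightarrow> ('x \<Rightarrow> bool) \<Rightarrow> 'x \<Rightarrow> bool" where
  "act_X g \<sigma> = (\<lambda>x. eval (\<lambda>v. case v of Inl x' \<Rightarrow> \<sigma> x' | Inr _ \<Rightarrow> False) (g (FVar (Inl x))))"

definition act_interp :: "('y \<Rightarrow> 'x set) \<Rightarrow> (('x + 'y) form \<Rightarrow> ('x + 'y) form)
    \<Rightarrow> ('y \<Rightarrow> ('x \<Rightarrow> bool) \<Rightarrow> bool) \<Rightarrow> ('y \<Rightarrow> ('x \<Rightarrow> bool) \<Rightarrow> bool)" where
  "act_interp D g s = (THE t. t \<in> interps D \<and>
      (\<forall>\<sigma>. ext_asg \<sigma> t = act_asg g (ext_asg (act_X (inv g) \<sigma>) s)))"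

definition assoc_group :: "('y \<Rightarrow> 'x set) \<Rightarrow> (('x + 'y) form \<Rightarrow> ('x + 'y) form) set
    \<Rightarrow> (('y \<Rightarrow> ('x \<Rightarrow> bool) \<Rightarrow> bool) \<Rightarrow> ('y \<Rightarrow> ('x \<Rightarrow> bool) \<Rightarrow> bool)) set" where
  "assoc_group D G = {f. bij_betw f (interps D) (interps D) \<and>
      (\<forall>s\<in>interps D. \<forall>\<sigma>. \<exists>g\<in>G. ext_asg (act_X g \<sigma>) (f s) = act_asg g (ext_asg \<sigma> s))}"

end

theory Submission
  imports Defs
begin

lemma eval_cong:
  "(\<forall>v\<in>fvars \<phi>. \<rho> v = \<rho>' v) \<Longrightarrow> eval \<rho> \<phi> = eval \<rho>' \<phi>"
  by (induction \<phi>) auto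

lemma actX_char:
  assumes "admissible D g" "\<forall>x'. \<rho> (Inl x') = \<sigma> x'"
  shows "act_X g \<sigma> x = eval \<rho> (g (FVar (Inl x)))"
proof -
  have "g (FVar (Inl x)) \<in> BF (range Inl)" using assms(1) unfolding admissible_def by blast
  hence "fvars (g (FVar (Inl x))) \<subseteq> range Inl" unfolding BF_def by auto
  thus ?thesis unfolding act_X_def using assms(2)
    by (intro eval_cong) auto
qed

lemma actX_inv:
  fixes g :: "('x + 'y) form \<Rightarrow> ('x + 'y) form"
  assumes "admissible D g" "admissible D (inv g)"
  shows "act_X (inv g) (act_X g \<sigma>) = \<sigma>"
proof
  fix x
  define \<rho> where "\<rho> = ext_asg \<sigma> (\<lambda>(_::'y) _. False)"
  have r: "\<forall>x'. \<rho> (Inl x') = \<sigma> x'" unfolding \<rho>_def ext_asg_def by simp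
  have b: "bij g" and ps: "preserves_sat g" using assms(1) unfolding admissible_def by auto
  have "\<forall>x'. act_asg g \<rho> (Inl x') = act_X g \<sigma> x'"
    using actX_char[OF assms(1) r] unfolding act_asg_def by simp
  hence "act_X (inv g) (act_X g \<sigma>) x = eval (act_asg g \<rho>) (inv g (FVar (Inl x)))"
    using actX_char[OF assms(2)] by blast
  also have "\<dots> = eval \<rho> (g (inv g (FVar (Inl x))))" using ps unfolding preserves_sat_def by simp
  also have "\<dots> = \<sigma> x" using b r by (simp add: bij_is_surj surj_f_inv_f)
  finally show "act_X (inv g) (act_X g \<sigma>) x = \<sigma> x" .
qed

lemma actX_inv2:
  assumes "admissible D g" "admissible D (inv g)"
  shows "act_X g (act_X (inv g) \<sigma>) = \<sigma>"
proof -
  have "bij g" using assms(1) unfolding admissible_def by auto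
  hence "inv (inv g) = g" by (rule inv_inv_eq)
  thus ?thesis using actX_inv[OF assms(2)] assms by metis
qed

definition T :: "(('x + 'y) form \<Rightarrow> ('x + 'y) form) \<Rightarrow> ('y \<Rightarrow> ('x \<Rightarrow> bool) \<Rightarrow> bool) \<Rightarrow> 'y \<Rightarrow> ('x \<Rightarrow> bool) \<Rightarrow> bool" where
  "T g s = (\<lambda>j \<sigma>. act_asg g (ext_asg (act_X (inv g) \<sigma>) s) (Inr j))"

lemma T_ext:
  fixes g :: "('x + 'y) form \<Rightarrow> ('x + 'y) form" and \<sigma> :: "'x \<Rightarrow> bool"
  assumes "admissible D g" "admissible D (inv g)"
  shows "ext_asg \<sigma> (T g s) = act_asg g (ext_asg (act_X (inv g) \<sigma>) s)"
proof
  fix v show "ext_asg \<sigma> (T g s) v = act_asg g (ext_asg (act_X (inv g) \<sigma>) s) v"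
  proof (cases v)
    case (Inl x)
    have r: "\<forall>x'. ext_asg (act_X (inv g) \<sigma>) s (Inl x') = act_X (inv g) \<sigma> x'"
      unfolding ext_asg_def by simp
    have "act_asg g (ext_asg (act_X (inv g) \<sigma>) s) (Inl x) = act_X g (act_X (inv g) \<sigma>) x"
      using actX_char[OF assms(1) r] unfolding act_asg_def by simp
    also have "\<dots> = \<sigma> x" using actX_inv2[OF assms] by simp
    finally show ?thesis using Inl unfolding ext_asg_def by simp
  next
    case (Inr j) thus ?thesis unfolding ext_asg_def T_def by simp
  qed
qed

lemma T_interps:
  fixes g :: "('x + 'y) form \<Rightarrow> ('x + 'y) form"
  assumes "admissible D g" "admissible D (inv g)" "s \<in> interps D"
  shows "T g s \<in> interps D"
  unfolding interps_def
proof (intro CollectI allI impI)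
  fix j and \<sigma> \<sigma>' :: "'x \<Rightarrow> bool"
  assume ag: "\<forall>x\<in>D j. \<sigma> x = \<sigma>' x"
  have bfy: "fvars (g (FVar (Inr j))) \<subseteq> range Inr"
    using assms(1) unfolding admissible_def BF_def by blast
  have dep: "\<And>j' x. Inr j' \<in> fvars (g (FVar (Inr j))) \<Longrightarrow> x \<in> D j' \<Longrightarrow>
      fvars (inv g (FVar (Inl x))) \<subseteq> Inl ` D j"
    using assms(1) unfolding admissible_def depends_on_def BF_def by blast
  have "\<forall>v\<in>fvars (g (FVar (Inr j))). ext_asg (act_X (inv g) \<sigma>) s v = ext_asg (act_X (inv g) \<sigma>') s v"
  proof
    fix v assume v: "v \<in> fvars (g (FVar (Inr j)))"
    then obtain j' where vj: "v = Inr j'" using bfy by blast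
    have "s j' (act_X (inv g) \<sigma>) = s j' (act_X (inv g) \<sigma>')"
    proof -
      have "\<forall>x\<in>D j'. act_X (inv g) \<sigma> x = act_X (inv g) \<sigma>' x"
      proof
        fix x assume x: "x \<in> D j'"
        have "fvars (inv g (FVar (Inl x))) \<subseteq> Inl ` D j" using dep v vj x by blast
        thus "act_X (inv g) \<sigma> x = act_X (inv g) \<sigma>' x" unfolding act_X_def using ag
          by (intro eval_cong) auto
      qed
      thus ?thesis using assms(3) unfolding interps_def by blast
    qed
    thus "ext_asg (act_X (inv g) \<sigma>) s v = ext_asg (act_X (inv g) \<sigma>') s v"
      using vj unfolding ext_asg_def by simp
  qed
  hence "eval (ext_asg (act_X (inv g) \<sigma>) s) (g (FVar (Inr j))) = eval (ext_asg (act_X (inv g) \<sigma>') s) (g (FVar (Inr j)))"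
    by (rule eval_cong)
  thus "T g s j \<sigma> = T g s j \<sigma>'" unfolding T_def act_asg_def by simp
qed

lemma ext_inj: "(\<forall>\<sigma>. ext_asg \<sigma> t = ext_asg \<sigma> t') \<Longrightarrow> t = t'"
proof (intro ext)
  fix j \<sigma> assume "\<forall>\<sigma>. ext_asg \<sigma> t = ext_asg \<sigma> t'"
  hence "ext_asg \<sigma> t (Inr j) = ext_asg \<sigma> t' (Inr j)" by simp
  thus "t j \<sigma> = t' j \<sigma>" unfolding ext_asg_def by simp
qed

lemma act_interp_T:
  assumes "admissible D g" "admissible D (inv g)" "s \<in> interps D"
  shows "act_interp D g s = T g s"
  unfolding act_interp_def
proof (rule the_equality)
  show "T g s \<in> interps D \<and> (\<forall>\<sigma>. ext_asg \<sigma> (T g s) = act_asg g (ext_asg (act_X (inv g) \<sigma>) s))"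
    using T_interps[OF assms] T_ext[OF assms(1,2)] by blast
next
  fix t assume "t \<in> interps D \<and> (\<forall>\<sigma>. ext_asg \<sigma> t = act_asg g (ext_asg (act_X (inv g) \<sigma>) s))"
  thus "t = T g s" using T_ext[OF assms(1,2)] by (intro ext_inj) simp
qed

lemma T_inv:
  assumes "admissible D g" "admissible D (inv g)"
  shows "T (inv g) (T g s) = s"
proof (rule ext_inj, rule allI)
  fix \<sigma>
  have b: "bij g" and ps: "preserves_sat g" and ps2: "preserves_sat (inv g)"
    using assms unfolding admissible_def by auto
  have ii: "inv (inv g) = g" using b by (rule inv_inv_eq)
  have a2: "admissible D (inv (inv g))" using ii assms by simp
  have "ext_asg \<sigma> (T (inv g) (T g s)) = act_asg (inv g) (ext_asg (act_X g \<sigma>) (T g s))"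
    using T_ext[OF assms(2) a2] ii by simp
  also have "\<dots> = act_asg (inv g) (act_asg g (ext_asg \<sigma> s))"
    using T_ext[OF assms] actX_inv[OF assms] by simp
  also have "\<dots> = ext_asg \<sigma> s"
  proof
    fix v
    have "act_asg (inv g) (act_asg g (ext_asg \<sigma> s)) v = eval (act_asg g (ext_asg \<sigma> s)) (inv g (FVar v))"
      unfolding act_asg_def ..
    also have "\<dots> = eval (ext_asg \<sigma> s) (g (inv g (FVar v)))"
      using ps unfolding preserves_sat_def by metis
    also have "\<dots> = ext_asg \<sigma> s v" using b by (simp add: bij_is_surj surj_f_inv_f)
    finally show "act_asg (inv g) (act_asg g (ext_asg \<sigma> s)) v = ext_asg \<sigma> s v" .
  qed
  finally show "ext_asg \<sigma> (T (inv g) (T g s)) = ext_asg \<sigma> s" .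
qed

theorem lemma4:
  fixes D :: "'y::finite \<Rightarrow> 'x::finite set"
    and G :: "(('x + 'y) form \<Rightarrow> ('x + 'y) form) set"
  assumes "admissible_group D G"
    and "g \<in> G"
  shows "act_interp D g \<in> assoc_group D G"
proof -
  have a1: "admissible D g" and a2: "admissible D (inv g)" and ig: "inv g \<in> G"
    using assms unfolding admissible_group_def by auto
  have b: "bij g" using a1 unfolding admissible_def by auto
  have ii: "inv (inv g) = g" using b by (rule inv_inv_eq)
  have a3: "admissible D (inv (inv g))" using ii a1 by simp
  have bij: "bij_betw (act_interp D g) (interps D) (interps D)"
  proof (rule bij_betw_byWitness[where f' = "act_interp D (inv g)"])
    show "\<forall>s\<in>interps D. act_interp D (inv g) (act_interp D g s) = s"
      using act_interp_T[OF a1 a2] act_interp_T[OF a2 a3] T_interps[OF a1 a2] T_inv[OF a1 a2] by simp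
    show "\<forall>s\<in>interps D. act_interp D g (act_interp D (inv g) s) = s"
      using act_interp_T[OF a1 a2] act_interp_T[OF a2 a3] T_interps[OF a2 a3] T_inv[OF a2 a3] ii by simp
    show "act_interp D g ` interps D \<subseteq> interps D"
      using act_interp_T[OF a1 a2] T_interps[OF a1 a2] by auto
    show "act_interp D (inv g) ` interps D \<subseteq> interps D"
      using act_interp_T[OF a2 a3] T_interps[OF a2 a3] by auto
  qed
  have "\<forall>s\<in>interps D. \<forall>\<sigma>. ext_asg (act_X g \<sigma>) (act_interp D g s) = act_asg g (ext_asg \<sigma> s)"
    using act_interp_T[OF a1 a2] T_ext[OF a1 a2] actX_inv[OF a1 a2] by simp
  thus ?thesis unfolding assoc_group_def using bij assms(2) by blast
qed

end
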